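(* Let $(\mathcal{X},\mathcal{B},\lambda)$ be a measure space with $\lambda$ positive and $\sigma$-finite, $P$ a probability measure with density $f\in\mathcal{L}^2(\mathcal{X},\lambda)$ with respect to $\lambda$, and $X_1,\dots,X_N$ ($N\ge2$) i.i.d. with law $P$. Let $m'\ge1$ and $\Theta_{m'}:\mathcal{X}\to(\mathcal{L}^2)^{m'}$ be a (measurable) map, and put $\Theta_{m'}(X_i)=(f_{i,1},\dots,f_{i,m'})$ for $i\in\{1,\dots,N\}$. Let $D_{i,k}=\int f_{i,k}^2d\lambda>0$ and assume there are known $C_{i,k}>0$, depending only on $X_i$, such that $|f_{i,k}(x)|\le\sqrt{C_{i,k}D_{i,k}}$ for all $x\in\mathcal{X}$. Let $\varepsilon>0$ and, for all $i,k$, let $\beta_{i,k,1},\beta_{i,k,2}$ (depending at most on $X_i$) satisfy $0<\beta_{i,k,j}<\frac{N-1}{\sqrt{C_{i,k}D_{i,k}}}$, $j\in\{1,2\}$. Then with $P^{\otimes N}$-probability at least $1-\varepsilon$, for all $i\in\{1,\dots,N\}$ and $k\in\{1,\dots,m'\}$, $$\tilde\alpha^{\inf}_{i,k}(\varepsilon,\beta_{i,k,1})\le\overline{\alpha}_{i,k}\le\tilde\alpha^{\sup}_{i,k}(\varepsilon,\beta_{i,k,2}),$$ where $$\tilde\alpha^{\sup}_{i,k}(\varepsilon,\beta)=\frac{N-1-(N-1)\exp\left[\frac1{N-1}\sum_{j\ne i}\log\left(1-\frac{\beta}{N-1}f_{i,k}(X_j)\right)-\frac{\log\frac{2m'N}{\varepsilon}}{N-1}\right]}{D_{i,k}\beta},$$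 $$\tilde\alpha^{\inf}_{i,k}(\varepsilon,\beta)=\frac{(N-1)\exp\left[\frac1{N-1}\sum_{j\ne i}\log\left(1+\frac{\beta}{N-1}f_{i,k}(X_j)\right)-\frac{\log\frac{2m'N}{\varepsilon}}{N-1}\right]-N+1}{D_{i,k}\beta}.$$
   Context: $\overline{\alpha}_{i,k}=\arg\min_{\alpha\in\mathbb{R}}\int(\alpha f_{i,k}-f)^2d\lambda=\frac{\int f_{i,k}f\,d\lambda}{D_{i,k}}$. The constants $C_{i,k}$ and the parameters $\beta_{i,k,j}$ are allowed to be (measurable) functions of $X_i$ only, since $f_{i,k}$ itself depends on $X_i$. *)

theory Defs
  imports "HOL-Probability.Probability"
begin

text \<open>Indices are 0-based: samples X 0, ..., X (N-1); components k = 0, ..., m'-1.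
  g is the function f_{i,k} (a function of the sample X i), D = D_{i,k}.\<close>

definition alpha_sup ::
  "nat \<Rightarrow> nat \<Rightarrow> real \<Rightarrow> ('a \<Rightarrow> real) \<Rightarrow> real \<Rightarrow> real \<Rightarrow> (nat \<Rightarrow> 'a) \<Rightarrow> nat \<Rightarrow> real" where
  "alpha_sup N m eps g D beta X i =
     (real N - 1 - (real N - 1) *
        exp ((1 / (real N - 1)) * (\<Sum>j\<in>{..<N} - {i}. ln (1 - beta / (real N - 1) * g (X j)))
             - ln (2 * real m * real N / eps) / (real N - 1)))
     / (D * beta)"

definition alpha_inf ::
  "nat \<Rightarrow> nat \<Rightarrow> real \<Rightarrow> ('a \<Rightarrow> real) \<Rightarrow> real \<Rightarrow> real \<Rightarrow> (nat \<Rightarrow> 'a) \<Rightarrow> nat \<Rightarrow> real" where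
  "alpha_inf N m eps g D beta X i =
     ((real N - 1) *
        exp ((1 / (real N - 1)) * (\<Sum>j\<in>{..<N} - {i}. ln (1 + beta / (real N - 1) * g (X j)))
             - ln (2 * real m * real N / eps) / (real N - 1))
      - real N + 1)
     / (D * beta)"

definition alpha_bar :: "'a measure \<Rightarrow> ('a \<Rightarrow> real) \<Rightarrow> ('a \<Rightarrow> real) \<Rightarrow> real" where
  "alpha_bar lam f g = (\<integral>y. g y * f y \<partial>lam) / (\<integral>y. (g y)\<^sup>2 \<partial>lam)"

end

theory Submission
  imports Defs
begin
lemma core_markov:
  fixes P :: "'a measure" and T :: "'a \<Rightarrow> 'a \<Rightarrow> real" and c :: "'a \<Rightarrow> real"
  assumes P: "prob_space P" and J: "finite J" "i \<notin> J" and dl: "0 < dl"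
    and Tm: "(\<lambda>(x,y). T x y) \<in> borel_measurable (P \<Otimes>\<^sub>M P)"
    and cm: "c \<in> borel_measurable P"
    and intT: "\<And>x. x \<in> space P \<Longrightarrow> integrable P (T x)"
    and bnd: "\<And>x y. x \<in> space P \<Longrightarrow> y \<in> space P \<Longrightarrow> \<bar>c x * T x y\<bar> < 1"
  shows "{X \<in> space (PiM (insert i J) (\<lambda>_. P)). (1 + c (X i) * (\<integral>y. T (X i) y \<partial>P)) ^ card J
          < dl * (\<Prod>j\<in>J. 1 + c (X i) * T (X i) (X j))} \<in> sets (PiM (insert i J) (\<lambda>_. P)) \<and>
     emeasure (PiM (insert i J) (\<lambda>_. P))
     {X \<in> space (PiM (insert i J) (\<lambda>_. P)). (1 + c (X i) * (\<integral>y. T (X i) y \<partial>P)) ^ card J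
          < dl * (\<Prod>j\<in>J. 1 + c (X i) * T (X i) (X j))} \<le> ennreal dl"
proof -
  interpret P: prob_space P by fact
  interpret PS: product_sigma_finite "\<lambda>_. P"
    unfolding product_sigma_finite_def using P.sigma_finite_measure_axioms by simp
  let ?Pi = "PiM (insert i J) (\<lambda>_. P)"
  define mu where "mu x = (\<integral>y. T x y \<partial>P)" for x
  define m where "m x = 1 + c x * mu x" for x
  define H where "H x y = 1 + c x * T x y" for x y
  define n where "n = card J"
  note Tm' = Tm[unfolded case_prod_beta]
  have Ty: "T x \<in> borel_measurable P" if "x \<in> space P" for x
    using measurable_Pair2[OF Tm that] by simp
  have mum[measurable]: "mu \<in> borel_measurable P"
    unfolding mu_def using P.borel_measurable_lebesgue_integral[OF Tm] .
  have mm[measurable]: "m \<in> borel_measurable P" unfolding m_def using mum cm by measurable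
  have Hpos: "0 < H x y" if "x \<in> space P" "y \<in> space P" for x y
    using bnd[OF that] unfolding H_def by linarith
  have intH: "integrable P (H x)" if "x \<in> space P" for x
    unfolding H_def using intT[OF that] by simp
  have intHe: "(\<integral>y. H x y \<partial>P) = m x" if "x \<in> space P" for x
    unfolding H_def m_def mu_def using intT[OF that] by (simp add: P.prob_space)
  have mpos: "0 < m x" if x: "x \<in> space P" for x
  proof -
    have "0 \<le> (\<integral>y. H x y \<partial>P)" using Hpos[OF x] by (intro integral_nonneg_AE AE_I2) (auto intro: less_imp_le)
    moreover have "(\<integral>y. H x y \<partial>P) \<noteq> 0"
    proof
      assume "(\<integral>y. H x y \<partial>P) = 0"
      then have "AE y in P. H x y = 0"
        using integral_nonneg_eq_0_iff_AE[OF intH[OF x]] Hpos[OF x] by (auto intro: less_imp_le)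
      then have "AE y in P. False" using AE_space by eventually_elim (use Hpos[OF x] in fastforce)
      then show False by simp
    qed
    ultimately show ?thesis using intHe[OF x] by simp
  qed
  have nnH: "(\<integral>\<^sup>+y. ennreal (H x y) \<partial>P) = ennreal (m x)" if x: "x \<in> space P" for x
    using nn_integral_eq_integral[OF intH[OF x]] Hpos[OF x] intHe[OF x] by (auto intro: less_imp_le)
  have Hm[measurable]: "(\<lambda>(x,y). H x y) \<in> borel_measurable (P \<Otimes>\<^sub>M P)"
    unfolding H_def using Tm cm by measurable
  note Hm' = Hm[unfolded case_prod_beta]
  define Z where "Z X = ennreal ((\<Prod>j\<in>J. H (X i) (X j)) / m (X i) ^ n)" for X
  have Zm[measurable]: "Z \<in> borel_measurable ?Pi"
    unfolding Z_def by measurable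
  have inner: "(\<integral>\<^sup>+X. Z (X(i := y)) \<partial>PiM J (\<lambda>_. P)) = 1" if y: "y \<in> space P" for y
  proof -
    have "(\<integral>\<^sup>+X. Z (X(i := y)) \<partial>PiM J (\<lambda>_. P))
        = (\<integral>\<^sup>+X. (\<Prod>j\<in>J. ennreal (H y (X j))) * ennreal (1 / m y ^ n) \<partial>PiM J (\<lambda>_. P))"
    proof (rule nn_integral_cong)
      fix X assume X: "X \<in> space (PiM J (\<lambda>_. P))"
      then have Xj: "X j \<in> space P" if "j \<in> J" for j using that by (auto simp: space_PiM)
      have "(\<Prod>j\<in>J. ennreal (H y (X j))) = ennreal (\<Prod>j\<in>J. H y (X j))"
        using Hpos[OF y Xj] by (intro prod_ennreal) (auto intro: less_imp_le)
      moreover have "(\<Prod>j\<in>J. H y ((X(i := y)) j)) = (\<Prod>j\<in>J. H y (X j))"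
        using J by (intro prod.cong) auto
      moreover have "0 \<le> (\<Prod>j\<in>J. H y (X j))"
        using Hpos[OF y Xj] by (intro prod_nonneg) (auto intro: less_imp_le)
      ultimately show "Z (X(i := y)) = (\<Prod>j\<in>J. ennreal (H y (X j))) * ennreal (1 / m y ^ n)"
        unfolding Z_def using mpos[OF y] by (simp add: ennreal_mult'' divide_inverse)
    qed
    also have "\<dots> = (\<integral>\<^sup>+X. (\<Prod>j\<in>J. ennreal (H y (X j))) \<partial>PiM J (\<lambda>_. P)) * ennreal (1 / m y ^ n)"
      by (rule nn_integral_multc) (use y in measurable)
    also have "(\<integral>\<^sup>+X. (\<Prod>j\<in>J. ennreal (H y (X j))) \<partial>PiM J (\<lambda>_. P)) = (\<Prod>j\<in>J. ennreal (m y))"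
      using PS.product_nn_integral_prod[OF J(1), of "\<lambda>_ z. ennreal (H y z)"] nnH[OF y]
      using measurable_Pair2[OF Hm y] by simp
    also have "(\<Prod>j\<in>J. ennreal (m y)) * ennreal (1 / m y ^ n) = 1"
    proof -
      have p: "0 < m y ^ n" using mpos[OF y] by simp
      have "(\<Prod>j\<in>J. ennreal (m y)) = ennreal (m y ^ n)"
        using mpos[OF y] by (simp add: n_def ennreal_power)
      also have "\<dots> * ennreal (1 / m y ^ n) = ennreal (m y ^ n * (1 / m y ^ n))"
        using p by (intro ennreal_mult[symmetric]) auto
      also have "m y ^ n * (1 / m y ^ n) = 1" using p by (simp del: power_eq_0_iff zero_less_power)
      finally show ?thesis by simp
    qed
    finally show ?thesis .
  qed
  have Zint: "(\<integral>\<^sup>+X. Z X \<partial>?Pi) = 1"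
  proof -
    have "(\<integral>\<^sup>+X. Z X \<partial>?Pi) = (\<integral>\<^sup>+ y. (\<integral>\<^sup>+ X. Z (X(i := y)) \<partial>(PiM J (\<lambda>_. P))) \<partial>P)"
      by (rule PS.product_nn_integral_insert_rev[OF J Zm])
    also have "\<dots> = (\<integral>\<^sup>+ y. 1 \<partial>P)"
      by (rule nn_integral_cong) (simp add: inner)
    finally show ?thesis by (simp add: P.emeasure_space_1)
  qed
  define E where "E = {X \<in> space ?Pi. (1 + c (X i) * (\<integral>y. T (X i) y \<partial>P)) ^ card J
          < dl * (\<Prod>j\<in>J. 1 + c (X i) * T (X i) (X j))}"
  have Em: "E \<in> sets ?Pi" unfolding E_def using Tm cm mum[unfolded mu_def] by measurable
  have ind: "indicator E X \<le> ennreal dl * Z X" if X: "X \<in> space ?Pi" for X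
  proof (cases "X \<in> E")
    case True
    have Xi: "X i \<in> space P" using X by (auto simp: space_PiM)
    from True have lt: "m (X i) ^ n < dl * (\<Prod>j\<in>J. H (X i) (X j))"
      unfolding E_def m_def mu_def H_def n_def by simp
    have "0 < m (X i) ^ n" using mpos[OF Xi] by simp
    then have one1: "1 \<le> dl * ((\<Prod>j\<in>J. H (X i) (X j)) / m (X i) ^ n)"
      using lt by (simp add: field_simps)
    moreover have "0 \<le> (\<Prod>j\<in>J. H (X i) (X j)) / m (X i) ^ n"
    proof -
      have "X j \<in> space P" if "j \<in> J" for j using X that by (auto simp: space_PiM)
      then have "0 \<le> (\<Prod>j\<in>J. H (X i) (X j))"
        using Hpos[OF Xi] by (intro prod_nonneg) (auto intro: less_imp_le)
      then show ?thesis using \<open>0 < m (X i) ^ n\<close> by simp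
    qed
    ultimately have "ennreal 1 \<le> ennreal dl * ennreal ((\<Prod>j\<in>J. H (X i) (X j)) / m (X i) ^ n)"
    proof -
      have "ennreal dl * ennreal ((\<Prod>j\<in>J. H (X i) (X j)) / m (X i) ^ n)
          = ennreal (dl * ((\<Prod>j\<in>J. H (X i) (X j)) / m (X i) ^ n))"
        using dl \<open>0 \<le> (\<Prod>j\<in>J. H (X i) (X j)) / m (X i) ^ n\<close> by (intro ennreal_mult[symmetric]) auto
      then show ?thesis using ennreal_leI[OF one1] by simp
    qed
    then show ?thesis using True unfolding Z_def by simp
  qed simp
  have "emeasure ?Pi E = (\<integral>\<^sup>+X. indicator E X \<partial>?Pi)" using Em by simp
  also have "\<dots> \<le> (\<integral>\<^sup>+X. ennreal dl * Z X \<partial>?Pi)"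
    by (rule nn_integral_mono) (rule ind)
  also have "\<dots> = ennreal dl" using Zint by (simp add: nn_integral_cmult)
  finally show ?thesis using Em unfolding E_def by simp
qed

lemma key_alg:
  fixes n1 dl L mm :: real and Hs :: "nat \<Rightarrow> real"
  assumes n1: "0 < n1" and dl: "0 < dl" and L: "L = - ln dl" and J: "finite J"
    and cJ: "real (card J) = n1" and Hs: "\<And>j. j \<in> J \<Longrightarrow> 0 < Hs j" and mm: "0 < mm"
    and ne: "\<not> (mm ^ card J < dl * (\<Prod>j\<in>J. Hs j))"
  shows "exp ((1 / n1) * (\<Sum>j\<in>J. ln (Hs j)) - L / n1) \<le> mm"
proof -
  have pp: "0 < (\<Prod>j\<in>J. Hs j)" using Hs by (intro prod_pos) auto
  have "dl * (\<Prod>j\<in>J. Hs j) \<le> mm ^ card J" using ne by simp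
  then have "ln (dl * (\<Prod>j\<in>J. Hs j)) \<le> ln (mm ^ card J)"
    using pp dl mm by (subst ln_le_cancel_iff) auto
  then have "ln dl + (\<Sum>j\<in>J. ln (Hs j)) \<le> n1 * ln mm"
  proof -
    have "ln (\<Prod>j\<in>J. Hs j) = (\<Sum>j\<in>J. ln (Hs j))"
      using Hs J by (intro ln_prod) (auto dest: Hs intro: less_imp_neq[symmetric])
    then show ?thesis using \<open>ln (dl * _) \<le> _\<close> pp dl mm cJ by (simp add: ln_mult ln_realpow)
  qed
  then have "(\<Sum>j\<in>J. ln (Hs j)) - L \<le> n1 * ln mm" using L by simp
  then have "((\<Sum>j\<in>J. ln (Hs j)) - L) / n1 \<le> ln mm" using n1 by (simp add: field_simps)
  then have "(1 / n1) * (\<Sum>j\<in>J. ln (Hs j)) - L / n1 \<le> ln mm" by (simp add: diff_divide_distrib)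
  then have "exp ((1 / n1) * (\<Sum>j\<in>J. ln (Hs j)) - L / n1) \<le> exp (ln mm)" by simp
  then show ?thesis using mm by simp
qed
lemma alg_inf:
  fixes e b n1 mu D rN :: real
  assumes "e \<le> 1 + b / n1 * mu" "0 < n1" "0 < D" "0 < b" "n1 = rN - 1"
  shows "(n1 * e - rN + 1) / (D * b) \<le> mu / D"
proof -
  have "n1 * e \<le> n1 * (1 + b / n1 * mu)" using assms by (intro mult_left_mono) auto
  also have "\<dots> = n1 + b * mu" using assms(2) by (simp add: field_simps)
  finally have "n1 * e - rN + 1 \<le> b * mu" using assms(5) by simp
  then have "(n1 * e - rN + 1) / (D * b) \<le> (b * mu) / (D * b)"
    using assms by (intro divide_right_mono) auto
  also have "(b * mu) / (D * b) = mu / D" using assms by simp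
  finally show ?thesis .
qed

lemma alg_sup:
  fixes e b n1 mu D rN :: real
  assumes "e \<le> 1 + - (b / n1) * mu" "0 < n1" "0 < D" "0 < b"
  shows "mu / D \<le> (n1 - n1 * e) / (D * b)"
proof -
  have "n1 * e \<le> n1 * (1 + - (b / n1) * mu)" using assms by (intro mult_left_mono) auto
  also have "\<dots> = n1 - b * mu" using assms(2) by (simp add: field_simps)
  finally have "b * mu \<le> n1 - n1 * e" by simp
  then have "(b * mu) / (D * b) \<le> (n1 - n1 * e) / (D * b)"
    using assms by (intro divide_right_mono) auto
  also have "(b * mu) / (D * b) = mu / D" using assms by simp
  finally show ?thesis .
qed


theorem theorem5:
  fixes lam :: "'a measure" and f :: "'a \<Rightarrow> real" and N m' :: nat and eps :: real
    and Theta :: "'a \<Rightarrow> nat \<Rightarrow> 'a \<Rightarrow> real"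
    and C beta1 beta2 :: "'a \<Rightarrow> nat \<Rightarrow> real"
  assumes sf: "sigma_finite_measure lam"
    and f_meas: "f \<in> borel_measurable lam"
    and f_nonneg: "\<And>y. y \<in> space lam \<Longrightarrow> 0 \<le> f y"
    and f_prob: "prob_space (density lam f)"
    and f_L2: "integrable lam (\<lambda>y. (f y)\<^sup>2)"
    and N2: "2 \<le> N" and m1: "1 \<le> m'" and eps: "0 < eps"
    and Theta_meas: "\<And>k. k < m' \<Longrightarrow> (\<lambda>(x, y). Theta x k y) \<in> borel_measurable (lam \<Otimes>\<^sub>M lam)"
    and Theta_L2: "\<And>x k. x \<in> space lam \<Longrightarrow> k < m' \<Longrightarrow> integrable lam (\<lambda>y. (Theta x k y)\<^sup>2)"
    and D_pos: "\<And>x k. x \<in> space lam \<Longrightarrow> k < m' \<Longrightarrow> 0 < (\<integral>y. (Theta x k y)\<^sup>2 \<partial>lam)"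
    and C_meas: "\<And>k. k < m' \<Longrightarrow> (\<lambda>x. C x k) \<in> borel_measurable lam"
    and C_pos: "\<And>x k. x \<in> space lam \<Longrightarrow> k < m' \<Longrightarrow> 0 < C x k"
    and bound: "\<And>x k y. x \<in> space lam \<Longrightarrow> k < m' \<Longrightarrow> y \<in> space lam \<Longrightarrow>
        \<bar>Theta x k y\<bar> \<le> sqrt (C x k * (\<integral>z. (Theta x k z)\<^sup>2 \<partial>lam))"
    and beta1_meas: "\<And>k. k < m' \<Longrightarrow> (\<lambda>x. beta1 x k) \<in> borel_measurable lam"
    and beta2_meas: "\<And>k. k < m' \<Longrightarrow> (\<lambda>x. beta2 x k) \<in> borel_measurable lam"
    and beta1: "\<And>x k. x \<in> space lam \<Longrightarrow> k < m' \<Longrightarrow>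
        0 < beta1 x k \<and> beta1 x k < (real N - 1) / sqrt (C x k * (\<integral>z. (Theta x k z)\<^sup>2 \<partial>lam))"
    and beta2: "\<And>x k. x \<in> space lam \<Longrightarrow> k < m' \<Longrightarrow>
        0 < beta2 x k \<and> beta2 x k < (real N - 1) / sqrt (C x k * (\<integral>z. (Theta x k z)\<^sup>2 \<partial>lam))"
  shows "\<exists>A \<in> sets (PiM {..<N} (\<lambda>_. density lam f)).
           measure (PiM {..<N} (\<lambda>_. density lam f)) A \<ge> 1 - eps \<and>
           (\<forall>X \<in> A. \<forall>i<N. \<forall>k<m'.
              alpha_inf N m' eps (Theta (X i) k) (\<integral>z. (Theta (X i) k z)\<^sup>2 \<partial>lam) (beta1 (X i) k) X i
                \<le> alpha_bar lam f (Theta (X i) k)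
            \<and> alpha_bar lam f (Theta (X i) k)
                \<le> alpha_sup N m' eps (Theta (X i) k) (\<integral>z. (Theta (X i) k z)\<^sup>2 \<partial>lam) (beta2 (X i) k) X i)"
proof -
  define P where "P = density lam f"
  define Pi where "Pi = PiM {..<N} (\<lambda>_. P)"
  define n1 where "n1 = real N - 1"
  define dl where "dl = eps / (2 * real m' * real N)"
  define D where "D x k = (\<integral>z. (Theta x k z)\<^sup>2 \<partial>lam)" for x k
  define S where "S x k = sqrt (C x k * D x k)" for x k
  define mu where "mu x k = (\<integral>y. Theta x k y \<partial>P)" for x k
  interpret P: prob_space P using f_prob P_def by simp
  interpret Pi: prob_space Pi unfolding Pi_def by (rule prob_space_PiM) (rule P.prob_space_axioms)
  have setsP[simp]: "sets P = sets lam" unfolding P_def by simp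
  have spaceP[simp]: "space P = space lam" unfolding P_def by simp
  have eqb: "measurable P (borel :: real measure) = measurable lam borel"
    by (rule measurable_cong_sets[OF setsP refl])
  have n1: "0 < n1" using N2 unfolding n1_def by simp
  have dl: "0 < dl" using eps m1 N2 unfolding dl_def by simp
  have Tm: "(\<lambda>(x,y). Theta x k y) \<in> borel_measurable (P \<Otimes>\<^sub>M P)" if "k < m'" for k
  proof -
    have eq: "measurable (P \<Otimes>\<^sub>M P) (borel :: real measure) = measurable (lam \<Otimes>\<^sub>M lam) borel"
      by (rule measurable_cong_sets[OF sets_pair_measure_cong[OF setsP setsP] refl])
    show ?thesis unfolding eq by (rule Theta_meas[OF that])
  qed
  have Spos: "0 < S x k" if "x \<in> space P" "k < m'" for x k
    using C_pos[of x k] D_pos[of x k] that unfolding S_def D_def by simp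
  have Tb: "\<bar>Theta x k y\<bar> \<le> S x k" if "x \<in> space P" "k < m'" "y \<in> space P" for x k y
    using bound[of x k y] that unfolding S_def D_def by simp
  have Tym: "Theta x k \<in> borel_measurable P" if "x \<in> space P" "k < m'" for x k
    using measurable_Pair2[OF Tm[OF that(2)] that(1)] by simp
  have intT: "integrable P (Theta x k)" if "x \<in> space P" "k < m'" for x k
    by (rule P.integrable_const_bound[where B="S x k"]) (use Tb[OF that] Tym[OF that] in auto)
  have mu_eq: "mu x k = (\<integral>y. Theta x k y * f y \<partial>lam)" if "x \<in> space P" "k < m'" for x k
  proof -
    have "Theta x k \<in> borel_measurable lam" using Tym[OF that] unfolding eqb .
    then show ?thesis unfolding mu_def P_def
      by (subst integral_density) (use f_meas f_nonneg in \<open>auto simp: mult.commute\<close>)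
  qed
  have abar: "alpha_bar lam f (Theta x k) = mu x k / D x k" if "x \<in> space P" "k < m'" for x k
    unfolding alpha_bar_def mu_eq[OF that] D_def ..
  define cc where "cc b x k = (if b then beta1 x k / n1 else - (beta2 x k / n1))" for b x k
  have ccm: "(\<lambda>x. cc b x k) \<in> borel_measurable P" if "k < m'" for b k
    using beta1_meas[OF that] beta2_meas[OF that] unfolding eqb cc_def by (cases b) auto
  have ccb: "\<bar>cc b x k * Theta x k y\<bar> < 1" if "x \<in> space P" "k < m'" "y \<in> space P" for b x k y
  proof -
    define bb where "bb = (if b then beta1 x k else beta2 x k)"
    have bb: "0 < bb \<and> bb < n1 / S x k"
      using beta1[of x k] beta2[of x k] that unfolding bb_def n1_def S_def D_def by auto
    have "\<bar>cc b x k * Theta x k y\<bar> = bb / n1 * \<bar>Theta x k y\<bar>"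
      unfolding cc_def bb_def using n1 beta1[of x k] beta2[of x k] that by (auto simp: abs_mult)
    also have "\<dots> \<le> bb / n1 * S x k" using Tb[OF that] bb n1 by (intro mult_left_mono) auto
    also have "\<dots> < 1" using bb n1 Spos[OF that(1,2)] by (simp add: field_simps)
    finally show ?thesis .
  qed
  define E where "E p = (case p of (i, k, b) \<Rightarrow> {X \<in> space Pi. (1 + cc b (X i) k * (\<integral>y. Theta (X i) k y \<partial>P)) ^ card ({..<N} - {i})
          < dl * (\<Prod>j\<in>{..<N} - {i}. 1 + cc b (X i) k * Theta (X i) k (X j))})" for p
  define I where "I = {..<N} \<times> {..<m'} \<times> (UNIV :: bool set)"
  have EI: "E p \<in> sets Pi \<and> emeasure Pi (E p) \<le> ennreal dl" if pI: "p \<in> I" for p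
  proof -
    obtain i k b where p: "p = (i, k, b)" and i: "i < N" and k: "k < m'" using pI unfolding I_def by (cases p) auto
    have ins: "insert i ({..<N} - {i}) = {..<N}" using i by auto
    have c: "{X \<in> space (PiM (insert i ({..<N} - {i})) (\<lambda>_. P)). (1 + cc b (X i) k * (\<integral>y. Theta (X i) k y \<partial>P)) ^ card ({..<N} - {i})
          < dl * (\<Prod>j\<in>{..<N} - {i}. 1 + cc b (X i) k * Theta (X i) k (X j))} \<in> sets (PiM (insert i ({..<N} - {i})) (\<lambda>_. P)) \<and>
     emeasure (PiM (insert i ({..<N} - {i})) (\<lambda>_. P))
     {X \<in> space (PiM (insert i ({..<N} - {i})) (\<lambda>_. P)). (1 + cc b (X i) k * (\<integral>y. Theta (X i) k y \<partial>P)) ^ card ({..<N} - {i})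
          < dl * (\<Prod>j\<in>{..<N} - {i}. 1 + cc b (X i) k * Theta (X i) k (X j))} \<le> ennreal dl"
      by (rule core_markov[where T="\<lambda>x y. Theta x k y" and c="\<lambda>x. cc b x k", OF P.prob_space_axioms _ _ dl Tm[OF k] ccm[OF k] intT[OF _ k] ccb[OF _ k]]) auto
    show ?thesis using c unfolding ins p E_def Pi_def by simp
  qed
  define A where "A = space Pi - (\<Union>p\<in>I. E p)"
  have finI: "finite I" unfolding I_def by simp
  have cardI: "real (card I) * dl = eps" unfolding I_def dl_def using m1 N2 by (simp add: card_cartesian_product)
  have UE: "(\<Union>p\<in>I. E p) \<in> sets Pi" using EI finI by (intro sets.finite_UN) auto
  have Asets: "A \<in> sets Pi" unfolding A_def using UE by auto
  have "Pi.prob (\<Union>p\<in>I. E p) \<le> (\<Sum>p\<in>I. Pi.prob (E p))"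
    by (rule Pi.finite_measure_subadditive_finite) (use finI EI in auto)
  also have "\<dots> \<le> (\<Sum>p\<in>I. dl)"
  proof (rule sum_mono)
    fix p assume "p \<in> I"
    then have "ennreal (Pi.prob (E p)) \<le> ennreal dl" using EI[OF \<open>p \<in> I\<close>] Pi.emeasure_eq_measure[of "E p"] by simp
    then show "Pi.prob (E p) \<le> dl" using dl by (simp add: ennreal_le_iff)
  qed
  also have "\<dots> = eps" using cardI by simp
  finally have probU: "Pi.prob (\<Union>p\<in>I. E p) \<le> eps" .
  have probA: "1 - eps \<le> Pi.prob A" unfolding A_def using Pi.prob_compl[OF UE] probU by simp
  have good: "alpha_inf N m' eps (Theta (X i) k) (\<integral>z. (Theta (X i) k z)\<^sup>2 \<partial>lam) (beta1 (X i) k) X i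
                \<le> alpha_bar lam f (Theta (X i) k)
            \<and> alpha_bar lam f (Theta (X i) k)
                \<le> alpha_sup N m' eps (Theta (X i) k) (\<integral>z. (Theta (X i) k z)\<^sup>2 \<partial>lam) (beta2 (X i) k) X i"
    if X: "X \<in> A" and i: "i < N" and k: "k < m'" for X i k
  proof -
    have Xs: "X \<in> space Pi" and nE: "\<And>b. X \<notin> E (i, k, b)"
      using X i k unfolding A_def I_def by auto
    define x where "x = X i"
    have Xj: "X j \<in> space P" if "j < N" for j using Xs that unfolding Pi_def by (auto simp: space_PiM)
    have x: "x \<in> space P" unfolding x_def using Xj[OF i] .
    define J where "J = {..<N} - {i}"
    have finJ: "finite J" unfolding J_def by simp
    have cJ: "real (card J) = n1" unfolding J_def n1_def using i by simp
    have DP: "0 < D x k" using D_pos[of x k] x k unfolding D_def by simp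
    have mub: "\<bar>mu x k\<bar> \<le> S x k"
    proof -
      have "\<bar>mu x k\<bar> \<le> (\<integral>y. \<bar>Theta x k y\<bar> \<partial>P)" unfolding mu_def
        using integral_norm_bound[of P "Theta x k"] by simp
      also have "\<dots> \<le> (\<integral>y. S x k \<partial>P)"
        using intT[OF x k] Tb[OF x k] by (intro integral_mono) auto
      also have "\<dots> = S x k" using P.prob_space unfolding spaceP by simp
      finally show ?thesis .
    qed
    have ccS: "\<bar>cc b x k\<bar> * S x k < 1" for b
    proof -
      define bb where "bb = (if b then beta1 x k else beta2 x k)"
      have bb: "0 < bb \<and> bb < n1 / S x k"
        using beta1[of x k] beta2[of x k] x k unfolding bb_def n1_def S_def D_def by auto
      have "\<bar>cc b x k\<bar> = bb / n1" unfolding cc_def bb_def using n1 bb bb_def by auto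
      then have "\<bar>cc b x k\<bar> * S x k = (bb * S x k) / n1" by simp
      moreover have "bb * S x k < n1" using bb Spos[OF x k] by (simp add: field_simps)
      ultimately show ?thesis using n1 by simp
    qed
    have mmpos: "0 < 1 + cc b x k * mu x k" for b
    proof -
      have "\<bar>cc b x k * mu x k\<bar> \<le> \<bar>cc b x k\<bar> * S x k"
        unfolding abs_mult using mub by (intro mult_left_mono) auto
      then show ?thesis using ccS[of b] by linarith
    qed
    have Hpos: "0 < 1 + cc b x k * Theta x k (X j)" if "j \<in> J" for b j
      using ccb[OF x k Xj, of j b] that unfolding J_def by auto
    have Lq: "ln (2 * real m' * real N / eps) = - ln dl"
      unfolding dl_def using eps m1 N2 by (simp add: ln_div)
    have ke: "exp ((1 / n1) * (\<Sum>j\<in>J. ln (1 + cc b x k * Theta x k (X j))) - ln (2 * real m' * real N / eps) / n1)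
        \<le> 1 + cc b x k * mu x k" for b
    proof (rule key_alg[OF n1 dl Lq finJ cJ Hpos mmpos])
      show "\<not> (1 + cc b x k * mu x k) ^ card J < dl * (\<Prod>j\<in>J. 1 + cc b x k * Theta x k (X j))"
        using nE[of b] Xs unfolding E_def J_def x_def mu_def by simp
    qed
    have b1: "0 < beta1 x k" and b2: "0 < beta2 x k" using beta1[OF x[unfolded spaceP] k] beta2[OF x[unfolded spaceP] k] by auto
    have "alpha_inf N m' eps (Theta x k) (D x k) (beta1 x k) X i \<le> mu x k / D x k"
      unfolding alpha_inf_def n1_def[symmetric] J_def[symmetric]
      by (rule alg_inf[OF _ n1 DP b1 n1_def]) (use ke[of True] in \<open>simp add: cc_def\<close>)
    moreover have "mu x k / D x k \<le> alpha_sup N m' eps (Theta x k) (D x k) (beta2 x k) X i"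
    proof -
      have se: "(\<Sum>j\<in>J. ln (1 + cc False x k * Theta x k (X j))) = (\<Sum>j\<in>J. ln (1 - beta2 x k / n1 * Theta x k (X j)))"
        unfolding cc_def by (intro sum.cong) auto
      show ?thesis
        unfolding alpha_sup_def n1_def[symmetric] J_def[symmetric]
        by (rule alg_sup[OF _ n1 DP b2]) (use ke[of False] in \<open>simp only: se, simp add: cc_def\<close>)
    qed
    ultimately show ?thesis using abar[OF x k] unfolding x_def D_def by simp
  qed
  have Asets': "A \<in> sets (PiM {..<N} (\<lambda>_. density lam f))" using Asets unfolding Pi_def P_def .
  have probA': "1 - eps \<le> measure (PiM {..<N} (\<lambda>_. density lam f)) A" using probA unfolding Pi_def P_def .
  show ?thesis
  proof (rule bexI[OF _ Asets'], rule conjI[OF probA'], intro ballI allI impI)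
    fix X i k assume "X \<in> A" "i < N" "k < m'"
    then show "alpha_inf N m' eps (Theta (X i) k) (\<integral>z. (Theta (X i) k z)\<^sup>2 \<partial>lam) (beta1 (X i) k) X i
                \<le> alpha_bar lam f (Theta (X i) k)
            \<and> alpha_bar lam f (Theta (X i) k)
                \<le> alpha_sup N m' eps (Theta (X i) k) (\<integral>z. (Theta (X i) k z)\<^sup>2 \<partial>lam) (beta2 (X i) k) X i"
      by (rule good)
  qed
qed

end
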